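(* Let $\Phi$ be an automorphism of $\Theta^0(\mathcal V)$ satisfying both of the following: (1) $\Phi(A)=A$ for every object $A$; (2) $s_A(x)=x$ for every object $A$ and every $x\in X_A$. Let $\omega$ be a basic operation symbol of arity $k\ge1$. Let $A$ be an object with basis $X_A=\{x_1,\dots,x_n\}$, where $n\ge k$. Put $\tilde w=s_A(\omega_A(x_1,\dots,x_k))\in A$. For each object $B$ and $b_1,\dots,b_k\in B$, define $$\tilde\omega_B(b_1,\dots,b_k)=\nu(\tilde w),$$ where $\nu:A\to B$ is the homomorphism with $\nu(x_i)=b_i$ for $i\le k$ and $\nu(x_i)=b_k$ for $k<i\le n$. Thus $\tilde\omega_B$ is the term (polynomial) operation on $B$ given by the term $\tilde w$. Then for every object $B$ and all $b_1,\dots,b_k\in B$, $$s_B(\omega_B(b_1,\dots,b_k))=\tilde\omega_B(s_B(b_1),\dots,s_B(b_k)).$$ That is, $s_B$ is an isomorphism of $B$ onto the algebra on the same set whose basic operations are the term operations $\tilde\omega_B$.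
   Context: $\mathcal V$ is a variety of universal algebras, and $X_0$ is a fixed infinite set. $\Theta^0(\mathcal V)$ is the full subcategory of the category of $\mathcal V$-algebras whose objects are the free $\mathcal V$-algebras on finite subsets of $X_0$. Each object $A$ has a designated basis $X_A\subseteq X_0$. Among the objects is the free algebra $A_0$ on a single $x_0\in X_0$. For an object $A$ and $a\in A$, $\alpha^A_a:A_0\to A$ is the homomorphism with $x_0\mapsto a$. For an automorphism $\Phi$ fixing $A_0$, the main function is $s_A(a)=\Phi(\alpha^A_a)(x_0)$. Each $s_A$ is a bijection, and $\Phi(\mu)=s_B\circ\mu\circ s_A^{-1}$ for every morphism $\mu:A\to B$. For an operation symbol $\omega$, $\omega_A$ denotes the corresponding operation of $A$. *)

theory Defs
  imports Main "HOL-Library.FuncSet"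
begin

text \<open>Terms over operation symbols of type 'f (with arity function ar) and
variables of type 'x (the type 'x plays the role of the set X0).\<close>

datatype ('f, 'x) trm = Var 'x | Fn 'f "('f, 'x) trm list"

fun wf_trm :: "('f \<Rightarrow> nat) \<Rightarrow> ('f, 'x) trm \<Rightarrow> bool" where
  "wf_trm ar (Var x) = True"
| "wf_trm ar (Fn f ts) = (length ts = ar f \<and> (\<forall>t\<in>set ts. wf_trm ar t))"

fun vars :: "('f, 'x) trm \<Rightarrow> 'x set" where
  "vars (Var x) = {x}"
| "vars (Fn f ts) = \<Union> (vars ` set ts)"

fun subst :: "('x \<Rightarrow> ('f, 'x) trm) \<Rightarrow> ('f, 'x) trm \<Rightarrow> ('f, 'x) trm" where
  "subst \<sigma> (Var x) = \<sigma> x"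
| "subst \<sigma> (Fn f ts) = Fn f (map (subst \<sigma>) ts)"

text \<open>The variety V is given by a set E of identities. deriv ar E is
equational derivability from E (the fully invariant congruence generated by E
on well-formed terms); by Birkhoff's theorem it coincides with validity in V.\<close>

inductive deriv :: "('f \<Rightarrow> nat) \<Rightarrow> (('f, 'x) trm \<times> ('f, 'x) trm) set
    \<Rightarrow> ('f, 'x) trm \<Rightarrow> ('f, 'x) trm \<Rightarrow> bool"
  for ar E where
  drefl: "wf_trm ar t \<Longrightarrow> deriv ar E t t"
| dsym: "deriv ar E t u \<Longrightarrow> deriv ar E u t"
| dtrans: "deriv ar E t u \<Longrightarrow> deriv ar E u v \<Longrightarrow> deriv ar E t v"
| dcong: "length ts = ar f \<Longrightarrow> list_all2 (deriv ar E) ts us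
           \<Longrightarrow> deriv ar E (Fn f ts) (Fn f us)"
| dax: "(l, r) \<in> E \<Longrightarrow> (\<forall>x. wf_trm ar (\<sigma> x))
           \<Longrightarrow> deriv ar E (subst \<sigma> l) (subst \<sigma> r)"
monos list_all2_mono

text \<open>Elements of free V-algebras: equivalence classes of terms.\<close>

definition cls :: "('f \<Rightarrow> nat) \<Rightarrow> (('f, 'x) trm \<times> ('f, 'x) trm) set
    \<Rightarrow> ('f, 'x) trm \<Rightarrow> ('f, 'x) trm set" where
  "cls ar E t = {u. deriv ar E t u}"

definition fcarrier :: "('f \<Rightarrow> nat) \<Rightarrow> (('f, 'x) trm \<times> ('f, 'x) trm) set
    \<Rightarrow> 'x set \<Rightarrow> ('f, 'x) trm set set" where
  "fcarrier ar E X = {cls ar E t | t. wf_trm ar t \<and> vars t \<subseteq> X}"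

text \<open>The basic operation omega_A (independent of the algebra A).\<close>

definition opr :: "('f \<Rightarrow> nat) \<Rightarrow> (('f, 'x) trm \<times> ('f, 'x) trm) set
    \<Rightarrow> 'f \<Rightarrow> ('f, 'x) trm set list \<Rightarrow> ('f, 'x) trm set" where
  "opr ar E f cs = cls ar E (Fn f (map (\<lambda>c. SOME t. t \<in> c) cs))"

definition fhom :: "('f \<Rightarrow> nat) \<Rightarrow> (('f, 'x) trm \<times> ('f, 'x) trm) set
    \<Rightarrow> 'x set \<Rightarrow> 'x set \<Rightarrow> (('f, 'x) trm set \<Rightarrow> ('f, 'x) trm set) set" where
  "fhom ar E X Y = {h. h \<in> fcarrier ar E X \<rightarrow>\<^sub>E fcarrier ar E Y \<and>
     (\<forall>f cs. length cs = ar f \<longrightarrow> set cs \<subseteq> fcarrier ar E X \<longrightarrow>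
        h (opr ar E f cs) = opr ar E f (map h cs))}"

text \<open>An automorphism of the category Theta^0(V): object map Fo (bijective on the
objects, i.e. finite subsets of X0) and morphism map Phi A B on hom(A,B), which is
functorial and bijective on each hom-set.\<close>

definition is_automorphism :: "('f \<Rightarrow> nat) \<Rightarrow> (('f, 'x) trm \<times> ('f, 'x) trm) set
    \<Rightarrow> ('x set \<Rightarrow> 'x set)
    \<Rightarrow> ('x set \<Rightarrow> 'x set \<Rightarrow> (('f, 'x) trm set \<Rightarrow> ('f, 'x) trm set)
                        \<Rightarrow> (('f, 'x) trm set \<Rightarrow> ('f, 'x) trm set)) \<Rightarrow> bool" where
  "is_automorphism ar E Fo Phi \<longleftrightarrow>
     bij_betw Fo {X. finite X} {X. finite X} \<and>
     (\<forall>A B. finite A \<longrightarrow> finite B \<longrightarrow>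
        bij_betw (Phi A B) (fhom ar E A B) (fhom ar E (Fo A) (Fo B))) \<and>
     (\<forall>A B C g h. finite A \<longrightarrow> finite B \<longrightarrow> finite C \<longrightarrow>
        h \<in> fhom ar E A B \<longrightarrow> g \<in> fhom ar E B C \<longrightarrow>
        Phi A C (compose (fcarrier ar E A) g h)
          = compose (fcarrier ar E (Fo A)) (Phi B C g) (Phi A B h)) \<and>
     (\<forall>A. finite A \<longrightarrow>
        Phi A A (restrict id (fcarrier ar E A)) = restrict id (fcarrier ar E (Fo A)))"

definition alpha :: "('f \<Rightarrow> nat) \<Rightarrow> (('f, 'x) trm \<times> ('f, 'x) trm) set \<Rightarrow> 'x
    \<Rightarrow> 'x set \<Rightarrow> ('f, 'x) trm set \<Rightarrow> (('f, 'x) trm set \<Rightarrow> ('f, 'x) trm set)" where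
  "alpha ar E x0 A a = (THE h. h \<in> fhom ar E {x0} A \<and> h (cls ar E (Var x0)) = a)"

definition mainfun :: "('f \<Rightarrow> nat) \<Rightarrow> (('f, 'x) trm \<times> ('f, 'x) trm) set
    \<Rightarrow> ('x set \<Rightarrow> 'x set \<Rightarrow> (('f, 'x) trm set \<Rightarrow> ('f, 'x) trm set)
                        \<Rightarrow> (('f, 'x) trm set \<Rightarrow> ('f, 'x) trm set))
    \<Rightarrow> 'x \<Rightarrow> 'x set \<Rightarrow> ('f, 'x) trm set \<Rightarrow> ('f, 'x) trm set" where
  "mainfun ar E Phi x0 A a = Phi {x0} A (alpha ar E x0 A a) (cls ar E (Var x0))"

end

theory Submission
  imports Defs
begin

lemma wf_subst: "wf_trm ar t \<Longrightarrow> (\<forall>x. wf_trm ar (\<sigma> x)) \<Longrightarrow> wf_trm ar (subst \<sigma> t)"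
  by (induction t) auto

lemma subst_subst: "subst \<sigma> (subst \<tau> t) = subst (\<lambda>x. subst \<sigma> (\<tau> x)) t"
  by (induction t) auto

lemma vars_subst: "vars (subst \<sigma> t) = (\<Union>x\<in>vars t. vars (\<sigma> x))"
  by (induction t) auto

lemma deriv_wf:
  assumes E_wf: "\<forall>(l, r) \<in> E. wf_trm ar l \<and> wf_trm ar r"
  shows "deriv ar E t u \<Longrightarrow> wf_trm ar t \<and> wf_trm ar u"
proof (induction rule: deriv.induct)
  case (dcong ts f us)
  then show ?case
    by (auto simp: list_all2_conv_all_nth in_set_conv_nth)
next
  case (dax l r \<sigma>)
  then show ?case using E_wf wf_subst by fastforce
qed auto

lemma deriv_subst:
  "deriv ar E t u \<Longrightarrow> \<forall>x. wf_trm ar (\<sigma> x) \<Longrightarrow> deriv ar E (subst \<sigma> t) (subst \<sigma> u)"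
proof (induction rule: deriv.induct)
  case (drefl t)
  then show ?case by (simp add: deriv.drefl wf_subst)
next
  case (dsym t u)
  then show ?case by (simp add: deriv.dsym)
next
  case (dtrans t u v)
  then show ?case by (meson deriv.dtrans)
next
  case (dcong ts f us)
  then show ?case
    by (auto intro!: deriv.dcong simp: list_all2_map1 list_all2_map2 elim: list_all2_mono)
next
  case (dax l r \<tau>)
  then show ?case
    by (simp add: subst_subst deriv.dax wf_subst)
qed

lemma cls_self: "wf_trm ar t \<Longrightarrow> t \<in> cls ar E t"
  by (simp add: cls_def deriv.drefl)

lemma cls_eq: "deriv ar E t u \<Longrightarrow> cls ar E t = cls ar E u"
  unfolding cls_def by (auto intro: deriv.dtrans deriv.dsym)

lemma cls_eqD: "wf_trm ar t \<Longrightarrow> cls ar E t = cls ar E u \<Longrightarrow> deriv ar E t u"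
  using cls_self[of ar t E] unfolding cls_def by (auto intro: deriv.dsym)

lemma opr_cls:
  assumes "\<forall>t\<in>set ts. wf_trm ar t" "length ts = ar f"
  shows "opr ar E f (map (cls ar E) ts) = cls ar E (Fn f ts)"
proof -
  have "deriv ar E (Fn f ts) (Fn f (map (\<lambda>c. SOME t. t \<in> c) (map (cls ar E) ts)))"
  proof (rule deriv.dcong)
    show "length ts = ar f" by fact
    show "list_all2 (deriv ar E) ts (map (\<lambda>c. SOME t. t \<in> c) (map (cls ar E) ts))"
    proof -
      have "\<And>t. t \<in> set ts \<Longrightarrow> deriv ar E t (SOME u. u \<in> cls ar E t)"
      proof -
        fix t assume "t \<in> set ts"
        then have "t \<in> cls ar E t" using assms cls_self by blast
        then have "(SOME u. u \<in> cls ar E t) \<in> cls ar E t" by (rule someI)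
        then show "deriv ar E t (SOME u. u \<in> cls ar E t)" by (simp add: cls_def)
      qed
      then show ?thesis by (auto simp: list_all2_conv_all_nth)
    qed
  qed
  then show ?thesis unfolding opr_def by (simp add: cls_eq)
qed

definition rep where "rep ar E X c = (SOME t. wf_trm ar t \<and> vars t \<subseteq> X \<and> c = cls ar E t)"

lemma rep_spec: "c \<in> fcarrier ar E X \<Longrightarrow>
   wf_trm ar (rep ar E X c) \<and> vars (rep ar E X c) \<subseteq> X \<and> c = cls ar E (rep ar E X c)"
  unfolding rep_def fcarrier_def by (rule someI_ex) blast

lemma carrier_list: "set cs \<subseteq> fcarrier ar E X \<Longrightarrow>
   cs = map (cls ar E) (map (rep ar E X) cs) \<and> (\<forall>t\<in>set (map (rep ar E X) cs). wf_trm ar t \<and> vars t \<subseteq> X)"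
proof -
  assume s: "set cs \<subseteq> fcarrier ar E X"
  have "map (cls ar E \<circ> rep ar E X) cs = cs"
    by (rule map_idI) (use s rep_spec[of _ ar E X] in auto)
  then show ?thesis using s rep_spec[of _ ar E X] by auto
qed

lemma cls_in: "wf_trm ar t \<Longrightarrow> vars t \<subseteq> X \<Longrightarrow> cls ar E t \<in> fcarrier ar E X"
  unfolding fcarrier_def by blast

lemma opr_in:
  assumes "set cs \<subseteq> fcarrier ar E X" "length cs = ar f"
  shows "opr ar E f cs \<in> fcarrier ar E X"
proof -
  let ?ts = "map (rep ar E X) cs"
  have h: "cs = map (cls ar E) ?ts" "\<forall>t\<in>set ?ts. wf_trm ar t \<and> vars t \<subseteq> X"
    using carrier_list[OF assms(1)] by auto
  have "opr ar E f cs = cls ar E (Fn f ?ts)"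
    by (subst h(1)) (rule opr_cls, use h assms in auto)
  moreover have "cls ar E (Fn f ?ts) \<in> fcarrier ar E X"
    by (rule cls_in) (use h assms in auto)
  ultimately show ?thesis by simp
qed

lemma hom_opr:
  assumes "h \<in> fhom ar E X Y" "length cs = ar f" "set cs \<subseteq> fcarrier ar E X"
  shows "h (opr ar E f cs) = opr ar E f (map h cs)"
  using assms unfolding fhom_def by simp

lemma hom_pi:
  assumes "h \<in> fhom ar E X Y" shows "h \<in> fcarrier ar E X \<rightarrow>\<^sub>E fcarrier ar E Y"
  using assms unfolding fhom_def by simp

lemma hom_unique:
  assumes h1: "h1 \<in> fhom ar E X Y" and h2: "h2 \<in> fhom ar E X Y"
    and eq: "\<forall>x\<in>X. h1 (cls ar E (Var x)) = h2 (cls ar E (Var x))"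
  shows "h1 = h2"
proof
  fix c
  show "h1 c = h2 c"
  proof (cases "c \<in> fcarrier ar E X")
    case True
    then obtain t where t: "wf_trm ar t" "vars t \<subseteq> X" "c = cls ar E t"
      unfolding fcarrier_def by blast
    have "wf_trm ar t \<Longrightarrow> vars t \<subseteq> X \<Longrightarrow> h1 (cls ar E t) = h2 (cls ar E t)"
    proof (induction t)
      case (Var x)
      then show ?case using eq by simp
    next
      case (Fn f ts)
      have o: "cls ar E (Fn f ts) = opr ar E f (map (cls ar E) ts)"
        using Fn.prems by (simp add: opr_cls)
      have s: "set (map (cls ar E) ts) \<subseteq> fcarrier ar E X"
        using Fn.prems by (auto intro!: cls_in)
      have l: "length (map (cls ar E) ts) = ar f" using Fn.prems by simp
      have "h1 (cls ar E (Fn f ts)) = opr ar E f (map h1 (map (cls ar E) ts))"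
        unfolding o by (rule hom_opr[OF h1 l s])
      also have "map h1 (map (cls ar E) ts) = map h2 (map (cls ar E) ts)"
        using Fn by auto
      also have "opr ar E f (map h2 (map (cls ar E) ts)) = h2 (cls ar E (Fn f ts))"
        unfolding o by (rule hom_opr[OF h2 l s, symmetric])
      finally show ?case .
    qed
    then show ?thesis using t by simp
  next
    case False
    then show ?thesis using PiE_arb[OF hom_pi[OF h1] False] PiE_arb[OF hom_pi[OF h2] False] by simp
  qed
qed

lemma hom_exists:
  assumes E_wf: "\<forall>(l, r) \<in> E. wf_trm ar l \<and> wf_trm ar r"
    and g: "\<forall>x\<in>X. g x \<in> fcarrier ar E Y"
  shows "\<exists>h \<in> fhom ar E X Y. \<forall>x\<in>X. h (cls ar E (Var x)) = g x"
proof -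
  define \<sigma> where "\<sigma> x = (if x \<in> X then rep ar E Y (g x) else Var x)" for x
  have \<sigma>wf: "\<forall>x. wf_trm ar (\<sigma> x)" using g rep_spec[of _ ar E Y] by (auto simp: \<sigma>_def)
  have \<sigma>v: "\<forall>x\<in>X. vars (\<sigma> x) \<subseteq> Y" using g rep_spec[of _ ar E Y] by (auto simp: \<sigma>_def)
  have \<sigma>c: "\<forall>x\<in>X. cls ar E (\<sigma> x) = g x" using g rep_spec[of _ ar E Y] by (auto simp: \<sigma>_def)
  define h where "h = restrict (\<lambda>c. cls ar E (subst \<sigma> (rep ar E X c))) (fcarrier ar E X)"
  have hc: "h (cls ar E t) = cls ar E (subst \<sigma> t)" if t: "wf_trm ar t" "vars t \<subseteq> X" for t
  proof -
    have c: "cls ar E t \<in> fcarrier ar E X" using t by (rule cls_in)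
    then have "cls ar E t = cls ar E (rep ar E X (cls ar E t))" using rep_spec by blast
    then have "deriv ar E t (rep ar E X (cls ar E t))" using t cls_eqD by blast
    then have "deriv ar E (subst \<sigma> t) (subst \<sigma> (rep ar E X (cls ar E t)))"
      using \<sigma>wf deriv_subst by blast
    then show ?thesis using c unfolding h_def by (simp add: cls_eq)
  qed
  have sub_in: "cls ar E (subst \<sigma> t) \<in> fcarrier ar E Y" if t: "wf_trm ar t" "vars t \<subseteq> X" for t
    by (rule cls_in) (use t \<sigma>wf \<sigma>v in \<open>auto simp: wf_subst vars_subst\<close>)
  have "h \<in> fhom ar E X Y"
    unfolding fhom_def
  proof (intro CollectI conjI allI impI)
    show "h \<in> fcarrier ar E X \<rightarrow>\<^sub>E fcarrier ar E Y"
    proof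
      fix c assume "c \<in> fcarrier ar E X"
      then show "h c \<in> fcarrier ar E Y"
        using rep_spec[of c ar E X] hc sub_in by metis
    qed (simp add: h_def)
  next
    fix f cs assume l: "length cs = ar f" and s: "set cs \<subseteq> fcarrier ar E X"
    let ?ts = "map (rep ar E X) cs"
    have hh: "cs = map (cls ar E) ?ts" "\<forall>t\<in>set ?ts. wf_trm ar t \<and> vars t \<subseteq> X"
      using carrier_list[OF s] by auto
    have "opr ar E f cs = cls ar E (Fn f ?ts)"
      by (subst hh(1)) (rule opr_cls, use hh l in auto)
    then have "h (opr ar E f cs) = cls ar E (Fn f (map (subst \<sigma>) ?ts))"
      using hc[of "Fn f ?ts"] hh l by auto
    also have "\<dots> = opr ar E f (map (cls ar E) (map (subst \<sigma>) ?ts))"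
      by (rule opr_cls[symmetric]) (use hh l \<sigma>wf in \<open>auto simp: wf_subst\<close>)
    also have "map (cls ar E) (map (subst \<sigma>) ?ts) = map h cs"
    proof -
      have "\<forall>c\<in>set cs. cls ar E (subst \<sigma> (rep ar E X c)) = h c"
      proof
        fix c assume c: "c \<in> set cs"
        then have r: "wf_trm ar (rep ar E X c)" "vars (rep ar E X c) \<subseteq> X" "c = cls ar E (rep ar E X c)"
          using s rep_spec[of c ar E X] by auto
        show "cls ar E (subst \<sigma> (rep ar E X c)) = h c"
          using hc[OF r(1,2)] r(3) by simp
      qed
      then show ?thesis by simp
    qed
    finally show "h (opr ar E f cs) = opr ar E f (map h cs)" .
  qed
  moreover have "\<forall>x\<in>X. h (cls ar E (Var x)) = g x"
    using hc[of "Var x" for x] \<sigma>c by simp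
  ultimately show ?thesis by blast
qed


lemma alpha_eq:
  assumes "h \<in> fhom ar E {x0} A" "h (cls ar E (Var x0)) = a"
  shows "alpha ar E x0 A a = h"
  unfolding alpha_def
proof (rule the_equality)
  show "h \<in> fhom ar E {x0} A \<and> h (cls ar E (Var x0)) = a" using assms by blast
next
  fix h' assume "h' \<in> fhom ar E {x0} A \<and> h' (cls ar E (Var x0)) = a"
  then show "h' = h" using assms hom_unique[of h' ar E "{x0}" A h] by auto
qed

lemma alpha_spec:
  assumes E_wf: "\<forall>(l, r) \<in> E. wf_trm ar l \<and> wf_trm ar r"
    and a: "a \<in> fcarrier ar E A"
  shows "alpha ar E x0 A a \<in> fhom ar E {x0} A \<and> alpha ar E x0 A a (cls ar E (Var x0)) = a"
proof -
  obtain h where "h \<in> fhom ar E {x0} A" "h (cls ar E (Var x0)) = a"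
    using hom_exists[OF E_wf, of "{x0}" "\<lambda>_. a" A] a by auto
  then show ?thesis using alpha_eq by metis
qed

lemma compose_hom:
  assumes h: "h \<in> fhom ar E X Y" and g: "g \<in> fhom ar E Y Z"
  shows "compose (fcarrier ar E X) g h \<in> fhom ar E X Z"
  unfolding fhom_def
proof (intro CollectI conjI allI impI)
  show "compose (fcarrier ar E X) g h \<in> fcarrier ar E X \<rightarrow>\<^sub>E fcarrier ar E Z"
    using h g unfolding fhom_def by (auto simp: compose_def)
next
  fix f cs assume l: "length cs = ar f" and s: "set cs \<subseteq> fcarrier ar E X"
  have o: "opr ar E f cs \<in> fcarrier ar E X" using opr_in[OF s l] .
  have s2: "set (map h cs) \<subseteq> fcarrier ar E Y" using s h unfolding fhom_def by auto
  have "compose (fcarrier ar E X) g h (opr ar E f cs) = g (h (opr ar E f cs))"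
    using o by (simp add: compose_def)
  also have "\<dots> = g (opr ar E f (map h cs))" using h l s unfolding fhom_def by auto
  also have "\<dots> = opr ar E f (map g (map h cs))" using g l s2 unfolding fhom_def by auto
  also have "map g (map h cs) = map (compose (fcarrier ar E X) g h) cs"
    using s by (auto simp: compose_def)
  finally show "compose (fcarrier ar E X) g h (opr ar E f cs) = opr ar E f (map (compose (fcarrier ar E X) g h) cs)" .
qed

lemma mainfun_nat:
  assumes E_wf: "\<forall>(l, r) \<in> E. wf_trm ar l \<and> wf_trm ar r"
    and aut: "is_automorphism ar E Fo Phi"
    and cond1: "\<forall>A. finite A \<longrightarrow> Fo A = A"
    and fin: "finite A" "finite B"
    and mu: "\<mu> \<in> fhom ar E A B" and a: "a \<in> fcarrier ar E A"
  shows "mainfun ar E Phi x0 B (\<mu> a) = Phi A B \<mu> (mainfun ar E Phi x0 A a)"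
proof -
  define \<alpha> where "\<alpha> = alpha ar E x0 A a"
  have al: "\<alpha> \<in> fhom ar E {x0} A" "\<alpha> (cls ar E (Var x0)) = a"
    using alpha_spec[OF E_wf a] unfolding \<alpha>_def by auto
  have x0c: "cls ar E (Var x0) \<in> fcarrier ar E {x0}" by (rule cls_in) auto
  have ch: "compose (fcarrier ar E {x0}) \<mu> \<alpha> \<in> fhom ar E {x0} B"
    by (rule compose_hom[OF al(1) mu])
  have cv: "compose (fcarrier ar E {x0}) \<mu> \<alpha> (cls ar E (Var x0)) = \<mu> a"
    using x0c al by (simp add: compose_def)
  have ae: "alpha ar E x0 B (\<mu> a) = compose (fcarrier ar E {x0}) \<mu> \<alpha>"
    by (rule alpha_eq[OF ch cv])
  have func: "Phi {x0} B (compose (fcarrier ar E {x0}) \<mu> \<alpha>)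
     = compose (fcarrier ar E (Fo {x0})) (Phi A B \<mu>) (Phi {x0} A \<alpha>)"
  proof -
    have "\<forall>A B C g h. finite A \<longrightarrow> finite B \<longrightarrow> finite C \<longrightarrow>
        h \<in> fhom ar E A B \<longrightarrow> g \<in> fhom ar E B C \<longrightarrow>
        Phi A C (compose (fcarrier ar E A) g h)
          = compose (fcarrier ar E (Fo A)) (Phi B C g) (Phi A B h)"
      using aut unfolding is_automorphism_def by (elim conjE) assumption
    then show ?thesis using al(1) mu fin by simp
  qed
  have fo: "Fo {x0} = {x0}" using cond1 by simp
  have "mainfun ar E Phi x0 B (\<mu> a) = Phi {x0} B (compose (fcarrier ar E {x0}) \<mu> \<alpha>) (cls ar E (Var x0))"
    unfolding mainfun_def ae ..
  also have "\<dots> = Phi A B \<mu> (Phi {x0} A \<alpha> (cls ar E (Var x0)))"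
    unfolding func fo using x0c by (simp add: compose_def)
  also have "\<dots> = Phi A B \<mu> (mainfun ar E Phi x0 A a)"
    unfolding mainfun_def \<alpha>_def ..
  finally show ?thesis .
qed

theorem mainTheorem6:
  fixes ar :: "'f \<Rightarrow> nat"
    and E :: "(('f, 'x) trm \<times> ('f, 'x) trm) set"
    and Fo :: "'x set \<Rightarrow> 'x set"
    and Phi :: "'x set \<Rightarrow> 'x set \<Rightarrow> (('f, 'x) trm set \<Rightarrow> ('f, 'x) trm set)
                  \<Rightarrow> (('f, 'x) trm set \<Rightarrow> ('f, 'x) trm set)"
    and x0 :: 'x and \<omega> :: 'f and k n :: nat and xs :: "'x list"
    and B :: "'x set" and bs :: "('f, 'x) trm set list"
    and \<nu> :: "('f, 'x) trm set \<Rightarrow> ('f, 'x) trm set"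
  assumes X0_inf: "infinite (UNIV :: 'x set)"
    and E_wf: "\<forall>(l, r) \<in> E. wf_trm ar l \<and> wf_trm ar r"
    and aut: "is_automorphism ar E Fo Phi"
    and cond1: "\<forall>A. finite A \<longrightarrow> Fo A = A"
    and cond2: "\<forall>A. finite A \<longrightarrow>
                  (\<forall>x\<in>A. mainfun ar E Phi x0 A (cls ar E (Var x)) = cls ar E (Var x))"
    and arity: "ar \<omega> = k" and k_pos: "k \<ge> 1"
    and basis: "distinct xs" "length xs = n" and n_ge: "n \<ge> k"
    and B_obj: "finite B"
    and bs: "length bs = k" "set bs \<subseteq> fcarrier ar E B"
    and \<nu>_hom: "\<nu> \<in> fhom ar E (set xs) B"
    and \<nu>_gen: "\<forall>i<n. \<nu> (cls ar E (Var (xs ! i)))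
                        = mainfun ar E Phi x0 B (bs ! min i (k - 1))"
  shows "mainfun ar E Phi x0 B (opr ar E \<omega> bs)
         = \<nu> (mainfun ar E Phi x0 (set xs)
                (opr ar E \<omega> (map (\<lambda>x. cls ar E (Var x)) (take k xs))))"
proof -
  define A where "A = set xs"
  have finA: "finite A" unfolding A_def by simp
  define idx where "idx x = (THE i. i < n \<and> xs ! i = x)" for x
  have idx: "idx (xs ! i) = i" if "i < n" for i
    unfolding idx_def
  proof (rule the_equality)
    show "i < n \<and> xs ! i = xs ! i" using that by simp
  next
    fix j assume "j < n \<and> xs ! j = xs ! i"
    then have "j < length xs" "i < length xs" "xs ! j = xs ! i" using that basis(2) by auto
    then show "j = i" using nth_eq_iff_index_eq[OF basis(1)] by blast
  qed
  define g where "g x = bs ! min (idx x) (k - 1)" for x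
  have bsin: "bs ! j \<in> fcarrier ar E B" if "j < k" for j
  proof -
    have "bs ! j \<in> set bs" using that bs(1) by simp
    then show ?thesis using bs(2) by blast
  qed
  have gin: "\<forall>x\<in>A. g x \<in> fcarrier ar E B"
  proof
    fix x assume "x \<in> A"
    have "min (idx x) (k - 1) < k" using k_pos by simp
    then show "g x \<in> fcarrier ar E B" unfolding g_def by (rule bsin)
  qed
  obtain \<mu> where mu: "\<mu> \<in> fhom ar E A B" and mug: "\<forall>x\<in>A. \<mu> (cls ar E (Var x)) = g x"
    using hom_exists[OF E_wf gin] by blast
  have mui: "\<mu> (cls ar E (Var (xs ! i))) = bs ! min i (k - 1)" if "i < n" for i
  proof -
    have "xs ! i \<in> A" using that basis unfolding A_def by simp
    then have "\<mu> (cls ar E (Var (xs ! i))) = g (xs ! i)" using mug by blast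
    then show ?thesis unfolding g_def idx[OF that] .
  qed
  define a where "a = opr ar E \<omega> (map (\<lambda>x. cls ar E (Var x)) (take k xs))"
  have aset: "set (map (\<lambda>x. cls ar E (Var x)) (take k xs)) \<subseteq> fcarrier ar E A"
    unfolding A_def by (auto intro!: cls_in dest: in_set_takeD)
  have alen: "length (map (\<lambda>x. cls ar E (Var x)) (take k xs)) = ar \<omega>"
    using arity basis n_ge by simp
  have ain: "a \<in> fcarrier ar E A" unfolding a_def by (rule opr_in[OF aset alen])
  have "\<mu> a = opr ar E \<omega> (map \<mu> (map (\<lambda>x. cls ar E (Var x)) (take k xs)))"
    unfolding a_def by (rule hom_opr[OF mu alen aset])
  also have "map \<mu> (map (\<lambda>x. cls ar E (Var x)) (take k xs)) = bs"
  proof (rule nth_equalityI)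
    show "length (map \<mu> (map (\<lambda>x. cls ar E (Var x)) (take k xs))) = length bs"
      using bs basis n_ge by simp
  next
    fix i assume "i < length (map \<mu> (map (\<lambda>x. cls ar E (Var x)) (take k xs)))"
    then have i: "i < k" "i < n" using basis n_ge by auto
    then show "map \<mu> (map (\<lambda>x. cls ar E (Var x)) (take k xs)) ! i = bs ! i"
    proof -
      have "min i (k - 1) = i" using i by simp
      then show ?thesis using mui[OF i(2)] i basis n_ge by simp
    qed
  qed
  finally have mua: "\<mu> a = opr ar E \<omega> bs" .
  have PhiHom: "Phi A B \<mu> \<in> fhom ar E A B"
  proof -
    have "\<forall>A B. finite A \<longrightarrow> finite B \<longrightarrow>
        bij_betw (Phi A B) (fhom ar E A B) (fhom ar E (Fo A) (Fo B))"
      using aut unfolding is_automorphism_def by (elim conjE) assumption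
    then have "bij_betw (Phi A B) (fhom ar E A B) (fhom ar E A B)"
      using finA B_obj cond1 by simp
    then show ?thesis using mu bij_betwE by blast
  qed
  have "Phi A B \<mu> = \<nu>"
  proof (rule hom_unique[OF PhiHom \<nu>_hom[folded A_def]], intro ballI)
    fix x assume x: "x \<in> A"
    then obtain i where i: "i < n" "x = xs ! i" using basis unfolding A_def by (auto simp: in_set_conv_nth)
    have xc: "cls ar E (Var x) \<in> fcarrier ar E A" using x by (auto intro!: cls_in)
    have c2: "mainfun ar E Phi x0 A (cls ar E (Var x)) = cls ar E (Var x)"
      using cond2 finA x by simp
    have "Phi A B \<mu> (cls ar E (Var x)) = Phi A B \<mu> (mainfun ar E Phi x0 A (cls ar E (Var x)))"
      by (simp only: c2)
    also have "\<dots> = mainfun ar E Phi x0 B (\<mu> (cls ar E (Var x)))"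
      by (rule mainfun_nat[OF E_wf aut cond1 finA B_obj mu xc, symmetric])
    also have "\<mu> (cls ar E (Var x)) = bs ! min i (k - 1)"
      using mui[OF i(1)] i(2) by simp
    also have "mainfun ar E Phi x0 B (bs ! min i (k - 1)) = \<nu> (cls ar E (Var x))"
      using \<nu>_gen i by simp
    finally show "Phi A B \<mu> (cls ar E (Var x)) = \<nu> (cls ar E (Var x))" .
  qed
  have "mainfun ar E Phi x0 B (opr ar E \<omega> bs) = mainfun ar E Phi x0 B (\<mu> a)"
    by (simp only: mua)
  also have "\<dots> = Phi A B \<mu> (mainfun ar E Phi x0 A a)"
    by (rule mainfun_nat[OF E_wf aut cond1 finA B_obj mu ain])
  also have "\<dots> = \<nu> (mainfun ar E Phi x0 A a)"
    by (simp only: \<open>Phi A B \<mu> = \<nu>\<close>)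
  finally show ?thesis unfolding a_def A_def .
qed

end
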